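(* For every permutation graph $G$, $\operatorname{box}(G)\le 2\Delta(G)+1$, where $\Delta(G)$ is the maximum degree of $G$.
   Context: For a permutation $\pi$ of $\{1,\dots,n\}$, the graph $G[\pi]$ has vertex set $\{1,\dots,n\}$ and an edge $ij$ iff $(i-j)(\pi^{-1}(i)-\pi^{-1}(j))<0$. A graph is a permutation graph if it is isomorphic to $G[\pi]$ for some permutation $\pi$. The boxicity $\operatorname{box}(G)$ is the minimum $b$ such that $G$ is the intersection graph of axis-parallel boxes in $\mathbb{R}^b$ (products of $b$ closed intervals), one box per vertex. *)

theory Defs
  imports Complex_Main "HOL-Combinatorics.Permutations"
begin

definition perm_edge :: "(nat \<Rightarrow> nat) \<Rightarrow> nat \<Rightarrow> nat \<Rightarrow> bool" where
  "perm_edge \<pi> i j \<longleftrightarrow>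
     (int i - int j) * (int (inv \<pi> i) - int (inv \<pi> j)) < 0"

definition is_permutation_graph :: "'a set \<Rightarrow> ('a \<Rightarrow> 'a \<Rightarrow> bool) \<Rightarrow> bool" where
  "is_permutation_graph V E \<longleftrightarrow>
     (\<exists>n \<pi> f. \<pi> permutes {1..n} \<and> bij_betw f V {1..n} \<and>
        (\<forall>u\<in>V. \<forall>v\<in>V. E u v \<longleftrightarrow> perm_edge \<pi> (f u) (f v)))"

definition box_rep :: "'a set \<Rightarrow> ('a \<Rightarrow> 'a \<Rightarrow> bool) \<Rightarrow> nat \<Rightarrow> bool" where
  "box_rep V E b \<longleftrightarrow>
     (\<exists>lo hi :: 'a \<Rightarrow> nat \<Rightarrow> real.
        (\<forall>v\<in>V. \<forall>k<b. lo v k \<le> hi v k) \<and>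
        (\<forall>u\<in>V. \<forall>v\<in>V. u \<noteq> v \<longrightarrow>
           (E u v \<longleftrightarrow> (\<forall>k<b. lo u k \<le> hi v k \<and> lo v k \<le> hi u k))))"

definition boxicity :: "'a set \<Rightarrow> ('a \<Rightarrow> 'a \<Rightarrow> bool) \<Rightarrow> nat" where
  "boxicity V E = (LEAST b. box_rep V E b)"

definition degree :: "'a set \<Rightarrow> ('a \<Rightarrow> 'a \<Rightarrow> bool) \<Rightarrow> 'a \<Rightarrow> nat" where
  "degree V E v = card {u\<in>V. u \<noteq> v \<and> E v u}"

text \<open>Maximum degree (0 for the empty graph).\<close>
definition max_degree :: "'a set \<Rightarrow> ('a \<Rightarrow> 'a \<Rightarrow> bool) \<Rightarrow> nat" where
  "max_degree V E = Max (insert 0 (degree V E ` V))"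

end

theory Submission
  imports Defs
begin

lemma coloring_exists:
  assumes finV: "finite V"
    and sym: "\<And>u v. u \<in> V \<Longrightarrow> v \<in> V \<Longrightarrow> E u v \<Longrightarrow> E v u"
    and deg: "\<And>v. v \<in> V \<Longrightarrow> card {u\<in>V. u \<noteq> v \<and> E v u} \<le> D"
  shows "\<exists>col::'a \<Rightarrow> nat. (\<forall>v\<in>V. col v < D + 1) \<and>
           (\<forall>u\<in>V. \<forall>v\<in>V. u \<noteq> v \<and> col u = col v \<longrightarrow> \<not> E u v)"
proof -
  have "\<And>W. W \<subseteq> V \<Longrightarrow> \<exists>col::'a \<Rightarrow> nat. (\<forall>v\<in>W. col v < D + 1) \<and>
           (\<forall>u\<in>W. \<forall>v\<in>W. u \<noteq> v \<and> col u = col v \<longrightarrow> \<not> E u v)"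
  proof -
    fix W assume "W \<subseteq> V"
    then have "finite W" using finV finite_subset by blast
    then show "W \<subseteq> V \<Longrightarrow> \<exists>col::'a \<Rightarrow> nat. (\<forall>v\<in>W. col v < D + 1) \<and>
           (\<forall>u\<in>W. \<forall>v\<in>W. u \<noteq> v \<and> col u = col v \<longrightarrow> \<not> E u v)"
    proof (induction W rule: finite_induct)
      case empty
      then show ?case by auto
    next
      case (insert w W)
      then obtain col :: "'a \<Rightarrow> nat" where c1: "\<forall>v\<in>W. col v < D + 1"
        and c2: "\<forall>u\<in>W. \<forall>v\<in>W. u \<noteq> v \<and> col u = col v \<longrightarrow> \<not> E u v" by auto
      define N where "N = {u\<in>W. u \<noteq> w \<and> E w u}"
      have wV: "w \<in> V" using insert by auto
      have NV: "N \<subseteq> {u\<in>V. u \<noteq> w \<and> E w u}" using insert unfolding N_def by auto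
      have "card N \<le> D"
        using card_mono[OF _ NV] finV deg[OF wV] by auto
      then have "card (col ` N) \<le> D" using card_image_le[of N col] insert(1) N_def by auto
      then have "\<not> {0..<D+1} \<subseteq> col ` N"
        using card_mono[of "col ` N" "{0..<D+1}"] insert(1) N_def by auto
      then obtain c where "c \<in> {0..<D+1}" and cN: "c \<notin> col ` N" by blast
      then have cD: "c < D + 1" by simp
      define col' where "col' = col(w := c)"
      show ?case
      proof (intro exI[of _ col'] conjI ballI impI)
        fix v assume "v \<in> insert w W" then show "col' v < D + 1"
          using c1 cD unfolding col'_def by auto
      next
        fix u v assume u: "u \<in> insert w W" and v: "v \<in> insert w W"
          and h: "u \<noteq> v \<and> col' u = col' v"
        show "\<not> E u v"
        proof (cases "u = w")
          case True
          then have "v \<in> W" "col v = c" using h v insert(2) unfolding col'_def by auto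
          then show ?thesis using cN True h unfolding N_def by auto
        next
          case False
          note uw = False
          show ?thesis
          proof (cases "v = w")
            case True
            then have "u \<in> W" "col u = c" using h u uw unfolding col'_def by auto
            moreover have "u \<in> V" using \<open>u \<in> W\<close> insert by auto
            ultimately show ?thesis using cN True h sym[of u w] wV unfolding N_def by auto
          next
            case False
            then have "u \<in> W" "v \<in> W" "col u = col v" using u v uw h insert(2)
              unfolding col'_def by auto
            then show ?thesis using c2 h by auto
          qed
        qed
      qed
    qed
  qed
  then show ?thesis by blast
qed

lemma box_from_chains:
  fixes lt :: "'a \<Rightarrow> 'a \<Rightarrow> bool" and g :: "'a \<Rightarrow> nat" and col :: "'a \<Rightarrow> nat"
  assumes finV: "finite V"
    and trans: "\<And>x y z. x \<in> V \<Longrightarrow> y \<in> V \<Longrightarrow> z \<in> V \<Longrightarrow> lt x y \<Longrightarrow> lt y z \<Longrightarrow> lt x z"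
    and mono: "\<And>x y. x \<in> V \<Longrightarrow> y \<in> V \<Longrightarrow> lt x y \<Longrightarrow> g x < g y"
    and gN: "\<And>x. x \<in> V \<Longrightarrow> g x \<le> N"
    and Eiff: "\<And>u v. u \<in> V \<Longrightarrow> v \<in> V \<Longrightarrow> u \<noteq> v \<Longrightarrow> E u v \<longleftrightarrow> \<not> lt u v \<and> \<not> lt v u"
    and colb: "\<And>v. v \<in> V \<Longrightarrow> col v < b"
    and colp: "\<And>u v. u \<in> V \<Longrightarrow> v \<in> V \<Longrightarrow> u \<noteq> v \<Longrightarrow> col u = col v \<Longrightarrow> \<not> E u v"
  shows "box_rep V E b"
proof -
  have chain: "lt x y \<or> lt y x" if "x \<in> V" "y \<in> V" "x \<noteq> y" "col x = col y" for x y
    using colp[OF that] Eiff[OF that(1-3)] by auto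
  define A where "A v k = insert (-1) ((\<lambda>x. real (g x) + 1/2) ` {x\<in>V. col x = k \<and> lt x v})" for v k
  define B where "B v k = insert (real N + 1) ((\<lambda>x. real (g x) - 1/2) ` {x\<in>V. col x = k \<and> lt v x})" for v k
  define lo where "lo v k = (if col v = k then real (g v) else Max (A v k))" for v k
  define hi where "hi v k = (if col v = k then real (g v) else Min (B v k))" for v k
  have finA: "finite (A v k)" "A v k \<noteq> {}" for v k using finV unfolding A_def by auto
  have finB: "finite (B v k)" "B v k \<noteq> {}" for v k using finV unfolding B_def by auto
  have MaxMin: "Max (A u k) \<le> Min (B v k)"
    if H: "\<And>x y. x \<in> V \<Longrightarrow> y \<in> V \<Longrightarrow> col x = k \<Longrightarrow> col y = k \<Longrightarrow> lt x u \<Longrightarrow> lt v y \<Longrightarrow> g x < g y"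
    for u v k
  proof -
    have "a \<le> c" if "a \<in> A u k" "c \<in> B v k" for a c
    proof -
      consider "a = -1" | x where "x \<in> V" "col x = k" "lt x u" "a = real (g x) + 1/2"
        using \<open>a \<in> A u k\<close> unfolding A_def by auto
      then show ?thesis
      proof cases
        case 1
        then show ?thesis using \<open>c \<in> B v k\<close> unfolding B_def by auto
      next
        case 2
        note xx = 2
        consider "c = real N + 1" | y where "y \<in> V" "col y = k" "lt v y" "c = real (g y) - 1/2"
          using \<open>c \<in> B v k\<close> unfolding B_def by auto
        then show ?thesis
        proof cases
          case 1
          then show ?thesis using xx gN[of x] by simp
        next
          case 2
          have "g x < g y" using H[of x y] xx 2 by auto
          then have "real (g x) + 1 \<le> real (g y)" by linarith
          then show ?thesis using xx 2 by simp
        qed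
      qed
    qed
    then show ?thesis using finA finB by (simp add: Max_le_iff Min_ge_iff)
  qed
  have key: "lo u k \<le> hi v k" if uV: "u \<in> V" and vV: "v \<in> V" and nuv: "\<not> lt u v"
    and nvu: "\<not> lt v u" and uv: "u \<noteq> v" for u v k
  proof (cases "col u = k")
    case cu: True
    show ?thesis
    proof (cases "col v = k")
      case True
      then show ?thesis using chain[OF uV vV uv] cu nuv nvu by auto
    next
      case False
      have "real (g u) \<le> c" if "c \<in> B v k" for c
      proof -
        consider "c = real N + 1" | y where "y \<in> V" "col y = k" "lt v y" "c = real (g y) - 1/2"
          using \<open>c \<in> B v k\<close> unfolding B_def by auto
        then show ?thesis
        proof cases
          case 1 then show ?thesis using gN[OF uV] by simp
        next
          case 2
          have "y \<noteq> u" using 2 nvu by auto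
          then have "lt u y \<or> lt y u" using chain[OF uV 2(1)] cu 2 by auto
          then have "lt u y" using trans[OF vV 2(1) uV] 2 nvu by auto
          then have "g u < g y" using mono uV 2 by auto
          then have "real (g u) + 1 \<le> real (g y)" by linarith
          then show ?thesis using 2 by simp
        qed
      qed
      then show ?thesis using cu False finB unfolding lo_def hi_def by (simp add: Min_ge_iff)
    qed
  next
    case cu: False
    show ?thesis
    proof (cases "col v = k")
      case cv: True
      have "a \<le> real (g v)" if "a \<in> A u k" for a
      proof -
        consider "a = -1" | x where "x \<in> V" "col x = k" "lt x u" "a = real (g x) + 1/2"
          using \<open>a \<in> A u k\<close> unfolding A_def by auto
        then show ?thesis
        proof cases
          case 1 then show ?thesis by simp
        next
          case 2
          have "x \<noteq> v" using 2 nvu by auto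
          then have "lt v x \<or> lt x v" using chain[OF vV 2(1)] cv 2 by auto
          then have "lt x v" using trans[OF vV 2(1) uV] 2 nvu by auto
          then have "g x < g v" using mono vV 2 by auto
          then have "real (g x) + 1 \<le> real (g v)" by linarith
          then show ?thesis using 2 by simp
        qed
      qed
      then show ?thesis using cu cv finA unfolding lo_def hi_def by (simp add: Max_le_iff)
    next
      case cv: False
      have "Max (A u k) \<le> Min (B v k)"
      proof (rule MaxMin)
        fix x y assume xV: "x \<in> V" and yV: "y \<in> V" and "col x = k" "col y = k"
          and xu: "lt x u" and vy: "lt v y"
        have "x \<noteq> y" using trans[OF vV yV uV] vy xu nvu by auto
        then have "lt x y \<or> lt y x" using chain[OF xV yV] \<open>col x = k\<close> \<open>col y = k\<close> by auto
        moreover have "\<not> lt y x"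
        proof
          assume "lt y x"
          then have "lt v x" using trans[OF vV yV xV] vy by auto
          then show False using trans[OF vV xV uV] xu nvu by auto
        qed
        ultimately show "g x < g y" using mono xV yV by auto
      qed
      then show ?thesis using cu cv unfolding lo_def hi_def by simp
    qed
  qed
  have sep: "\<exists>k<b. \<not> (lo u k \<le> hi v k \<and> lo v k \<le> hi u k)"
    if uV: "u \<in> V" and vV: "v \<in> V" and uv: "lt u v" for u v
  proof -
    let ?k = "col u"
    have guv: "g u < g v" using mono uV vV uv by auto
    have "real (g u) < lo v ?k"
    proof (cases "col v = col u")
      case True then show ?thesis using guv unfolding lo_def by simp
    next
      case False
      have "real (g u) + 1/2 \<in> A v ?k" using uV uv unfolding A_def by auto
      then have "real (g u) + 1/2 \<le> Max (A v ?k)" using finA by simp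
      then show ?thesis using False unfolding lo_def by simp
    qed
    moreover have "hi u ?k = real (g u)" unfolding hi_def by simp
    ultimately show ?thesis using colb[OF uV] by (intro exI[of _ ?k]) auto
  qed
  have P1: "lo v k \<le> hi v k" if vV: "v \<in> V" for v k
    proof (cases "col v = k")
      case True then show ?thesis unfolding lo_def hi_def by simp
    next
      case False
      have "Max (A v k) \<le> Min (B v k)"
        by (rule MaxMin) (use mono trans vV in blast)
      then show ?thesis using False unfolding lo_def hi_def by simp
    qed
  have P2: "E u v \<longleftrightarrow> (\<forall>k<b. lo u k \<le> hi v k \<and> lo v k \<le> hi u k)"
    if uV: "u \<in> V" and vV: "v \<in> V" and uv: "u \<noteq> v" for u v
    proof
      assume "E u v"
      then have "\<not> lt u v" "\<not> lt v u" using Eiff[OF uV vV uv] by auto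
      then show "\<forall>k<b. lo u k \<le> hi v k \<and> lo v k \<le> hi u k"
        using key[OF uV vV] key[OF vV uV] uv by auto
    next
      assume all: "\<forall>k<b. lo u k \<le> hi v k \<and> lo v k \<le> hi u k"
      show "E u v"
      proof (rule ccontr)
        assume "\<not> E u v"
        then have "lt u v \<or> lt v u" using Eiff[OF uV vV uv] by auto
        then show False
          using sep[OF uV vV] sep[OF vV uV] all by blast
      qed
    qed
  show ?thesis unfolding box_rep_def
    by (rule exI[of _ lo], rule exI[of _ hi]) (use P1 P2 in blast)
qed

theorem theorem9:
  fixes V :: "'a set" and E :: "'a \<Rightarrow> 'a \<Rightarrow> bool"
  assumes "is_permutation_graph V E"
  shows "boxicity V E \<le> 2 * max_degree V E + 1"
proof -
  obtain n \<pi> f where p: "\<pi> permutes {1..n}" and bf: "bij_betw f V {1..n}"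
    and Ee: "\<forall>u\<in>V. \<forall>v\<in>V. E u v \<longleftrightarrow> perm_edge \<pi> (f u) (f v)"
    using assms unfolding is_permutation_graph_def by blast
  have finV: "finite V" using bf bij_betw_finite by blast
  have injf: "inj_on f V" using bf bij_betw_def by blast
  have fV: "f v \<le> n" if "v \<in> V" for v using bf that bij_betwE by fastforce
  have injp: "inj (inv \<pi>)" using permutes_inv[OF p] permutes_inj by blast
  define lt where "lt u v \<longleftrightarrow> f u < f v \<and> inv \<pi> (f u) < inv \<pi> (f v)" for u v
  have Eiff: "E u v \<longleftrightarrow> \<not> lt u v \<and> \<not> lt v u" if "u \<in> V" "v \<in> V" "u \<noteq> v" for u v
  proof -
    have a: "f u \<noteq> f v" using injf that inj_on_def by metis
    have b: "inv \<pi> (f u) \<noteq> inv \<pi> (f v)" using injp a inj_eq by metis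
    show ?thesis using Ee that a b unfolding perm_edge_def lt_def mult_less_0_iff by auto
  qed
  have sym: "E v u" if "u \<in> V" "v \<in> V" "E u v" for u v
    using Eiff that by (cases "u = v") auto
  have degle: "degree V E v \<le> max_degree V E" if "v \<in> V" for v
    unfolding max_degree_def using finV that by (intro Max_ge) auto
  obtain col :: "'a \<Rightarrow> nat" where c1: "\<forall>v\<in>V. col v < max_degree V E + 1"
    and c2: "\<forall>u\<in>V. \<forall>v\<in>V. u \<noteq> v \<and> col u = col v \<longrightarrow> \<not> E u v"
    using coloring_exists[OF finV, of E "max_degree V E"] sym degle unfolding degree_def by blast
  have "box_rep V E (max_degree V E + 1)"
    by (rule box_from_chains[where lt = lt and g = f and N = n and col = col])
       (use finV fV Eiff c1 c2 in \<open>auto simp: lt_def\<close>)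
  then have "boxicity V E \<le> max_degree V E + 1"
    unfolding boxicity_def by (rule Least_le)
  then show ?thesis by simp
qed

end
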